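(* Let $m,n$ be positive integers with $n$ odd, and let $a_k,b_k\in\mathbb{Z}$ for $k=0,1,\ldots,m$ with $a_0+b_0=0$. Then, for a variable $x$, $$\det\left[x+\tan\pi\frac{a_j+b_k}n\right]_{0\le j,k\le m}-\det\left[\tan\pi\frac{a_j+b_k}n\right]_{0\le j,k\le m}=x\det\left[\tan\pi\frac{a_j+b_k}n\right]_{1\le j,k\le m}\times\prod_{k=1}^m\left(\tan\pi\frac{a_k+b_0}n\times\tan\pi\frac{a_0+b_k}n\right).$$ *)

theory Defs
  imports Complex_Main "Jordan_Normal_Form.Determinant"
begin

end

theory Submission
  imports Defs
begin

definition Lm :: "nat \<Rightarrow> 'a::comm_ring_1 mat" where
  "Lm n = mat n n (\<lambda>(i,j). if i = j then 1 else if j = 0 then -1 else 0)"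

lemma Lm_carrier[simp]: "Lm n \<in> carrier_mat n n" by (simp add: Lm_def)
lemma Lm_dim[simp]: "dim_row (Lm n) = n" "dim_col (Lm n) = n" by (simp_all add: Lm_def)

lemma det_Lm: "det (Lm n :: 'a::comm_ring_1 mat) = 1"
proof -
  have "det (Lm n :: 'a mat) = prod_list (diag_mat (Lm n :: 'a mat))"
    by (rule det_lower_triangular[of n]) (auto simp: Lm_def)
  also have "diag_mat (Lm n :: 'a mat) = replicate n 1"
    unfolding diag_mat_def by (rule nth_equalityI) (auto simp: Lm_def)
  also have "prod_list (replicate n (1::'a)) = 1" by simp
  finally show ?thesis .
qed

lemma Lm_left:
  assumes A: "A \<in> carrier_mat n c" and i: "i < n" and k: "k < c"
  shows "(Lm n * A) $$ (i,k) = (if i = 0 then A $$ (0,k) else A $$ (i,k) - A $$ (0,k))"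
proof -
  have "(Lm n * A) $$ (i,k) = (\<Sum>a\<in>{0..<n}. (if i = a then 1 else if a = 0 then -1 else 0) * A $$ (a,k))"
    using A i k by (simp add: Lm_def scalar_prod_def)
  also have "\<dots> = (\<Sum>a\<in>{0..<n}. (if i = a then A $$ (a,k) else 0) - (if a = 0 \<and> i \<noteq> 0 then A $$ (a,k) else 0))"
    by (rule sum.cong) auto
  also have "\<dots> = (if i = 0 then A $$ (0,k) else A $$ (i,k) - A $$ (0,k))"
    using i by (simp add: sum_subtractf)
  finally show ?thesis .
qed

lemma Lm_right:
  assumes A: "A \<in> carrier_mat r n" and j: "j < r" and k: "k < n"
  shows "(A * (Lm n)\<^sup>T) $$ (j,k) = (if k = 0 then A $$ (j,0) else A $$ (j,k) - A $$ (j,0))"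
proof -
  have "(A * (Lm n)\<^sup>T) $$ (j,k) = (\<Sum>a\<in>{0..<n}. A $$ (j,a) * (if k = a then 1 else if a = 0 then -1 else 0))"
    using A j k by (simp add: Lm_def scalar_prod_def)
  also have "\<dots> = (\<Sum>a\<in>{0..<n}. (if k = a then A $$ (j,a) else 0) - (if a = 0 \<and> k \<noteq> 0 then A $$ (j,a) else 0))"
    by (rule sum.cong) auto
  also have "\<dots> = (if k = 0 then A $$ (j,0) else A $$ (j,k) - A $$ (j,0))"
    using k by (simp add: sum_subtractf)
  finally show ?thesis .
qed

definition Nm :: "nat \<Rightarrow> 'a::comm_ring_1 \<Rightarrow> (nat \<Rightarrow> nat \<Rightarrow> 'a) \<Rightarrow> 'a mat" where
  "Nm n y T = mat n n (\<lambda>(j,k). if j = 0 \<and> k = 0 then y else if j = 0 then T 0 k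
      else if k = 0 then T j 0 else T j k - T j 0 - T 0 k)"

lemma LML:
  fixes T :: "nat \<Rightarrow> nat \<Rightarrow> 'a::comm_ring_1"
  assumes "T 0 0 = 0"
  shows "Lm n * mat n n (\<lambda>(j,k). y + T j k) * (Lm n)\<^sup>T = Nm n y T"
proof (rule eq_matI)
  fix j k assume j: "j < dim_row (Nm n y T)" and k: "k < dim_col (Nm n y T)"
  let ?M = "mat n n (\<lambda>(j,k). y + T j k)"
  have LM: "Lm n * ?M \<in> carrier_mat n n" by (rule mult_carrier_mat[of _ n n]) auto
  have jn: "j < n" and kn: "k < n" using j k by (auto simp: Nm_def)
  have "(Lm n * ?M * (Lm n)\<^sup>T) $$ (j,k) = (if k = 0 then (Lm n * ?M) $$ (j,0) else (Lm n * ?M) $$ (j,k) - (Lm n * ?M) $$ (j,0))"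
    by (rule Lm_right[OF LM jn kn])
  also have "\<dots> = Nm n y T $$ (j,k)"
  proof -
    have LMe: "(Lm n * ?M) $$ (j',k') = (if j' = 0 then ?M $$ (0,k') else ?M $$ (j',k') - ?M $$ (0,k'))"
      if "j' < n" "k' < n" for j' k'
      by (rule Lm_left) (use that in auto)
    show ?thesis using jn kn assms by (simp add: LMe Nm_def algebra_simps del: index_mult_mat)
  qed
  finally show "(Lm n * ?M * (Lm n)\<^sup>T) $$ (j,k) = Nm n y T $$ (j,k)" .
qed (auto simp: Nm_def)

lemma det_Nm:
  fixes T :: "nat \<Rightarrow> nat \<Rightarrow> 'a::comm_ring_1"
  assumes "T 0 0 = 0"
  shows "det (mat n n (\<lambda>(j,k). y + T j k)) = det (Nm n y T)"
proof -
  let ?M = "mat n n (\<lambda>(j,k). y + T j k)"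
  have "det (Nm n y T) = det (Lm n * ?M * (Lm n)\<^sup>T)" using LML[where T=T, OF assms] by simp
  also have "\<dots> = det (Lm n * ?M) * det ((Lm n)\<^sup>T)"
    by (rule det_mult[of _ n]) auto
  also have "\<dots> = det ?M"
    by (simp add: det_mult[of _ n] det_transpose[of _ n] det_Lm)
  finally show ?thesis by simp
qed

lemma key:
  fixes T :: "nat \<Rightarrow> nat \<Rightarrow> 'a::comm_ring_1"
  assumes "T 0 0 = 0"
  shows "det (mat (Suc m) (Suc m) (\<lambda>(j,k). x + T j k)) - det (mat (Suc m) (Suc m) (\<lambda>(j,k). T j k))
    = x * det (mat m m (\<lambda>(j,k). T (j+1) (k+1) - T (j+1) 0 - T 0 (k+1)))"
proof -
  have T0: "mat (Suc m) (Suc m) (\<lambda>(j,k). T j k) = mat (Suc m) (Suc m) (\<lambda>(j,k). 0 + T j k)" by simp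
  have del: "mat_delete (Nm (Suc m) y T) 0 k = mat_delete (Nm (Suc m) 0 T) 0 k" for y k
    by (rule eq_matI) (auto simp: mat_delete_def Nm_def)
  have exp: "det (Nm (Suc m) y T) = (\<Sum>k<Suc m. Nm (Suc m) y T $$ (0,k) * cofactor (Nm (Suc m) 0 T) 0 k)" for y
  proof -
    have "det (Nm (Suc m) y T) = (\<Sum>k<Suc m. Nm (Suc m) y T $$ (0,k) * cofactor (Nm (Suc m) y T) 0 k)"
      by (rule laplace_expansion_row) (auto simp: Nm_def)
    then show ?thesis unfolding cofactor_def del[of y] .
  qed
  have "det (Nm (Suc m) x T) - det (Nm (Suc m) 0 T)
     = (\<Sum>k<Suc m. (Nm (Suc m) x T $$ (0,k) - Nm (Suc m) 0 T $$ (0,k)) * cofactor (Nm (Suc m) 0 T) 0 k)"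
    unfolding exp left_diff_distrib sum_subtractf ..
  also have "\<dots> = (\<Sum>k<Suc m. (if k = 0 then x * cofactor (Nm (Suc m) 0 T) 0 0 else 0))"
    by (rule sum.cong) (simp_all add: Nm_def)
  also have "\<dots> = x * cofactor (Nm (Suc m) 0 T) 0 0" by simp
  finally have 1: "det (Nm (Suc m) x T) - det (Nm (Suc m) 0 T) = x * cofactor (Nm (Suc m) 0 T) 0 0" .
  have 2: "mat_delete (Nm (Suc m) 0 T) 0 0 = mat m m (\<lambda>(j,k). T (j+1) (k+1) - T (j+1) 0 - T 0 (k+1))"
    by (rule eq_matI) (auto simp: mat_delete_def Nm_def)
  show ?thesis
    unfolding T0 det_Nm[where T=T, OF assms] 1 by (simp add: cofactor_def 2)
qed

lemma tan_id:
  fixes p q :: real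
  assumes "cos p \<noteq> 0" "cos q \<noteq> 0" "cos (p+q) \<noteq> 0"
  shows "tan (p+q) - tan p - tan q = tan p * tan (p+q) * tan q"
proof -
  have c: "cos p * cos q - sin p * sin q \<noteq> 0" using assms(3) by (simp add: cos_add)
  show ?thesis using assms c unfolding tan_def sin_add cos_add
    by (simp add: field_simps)
qed

lemma cos_nz:
  assumes "odd n" shows "cos (pi * real_of_int z / real n) \<noteq> 0"
proof
  assume "cos (pi * real_of_int z / real n) = 0"
  then obtain i where i: "odd i" "pi * real_of_int z / real n = of_int i * (pi/2)"
    using cos_zero_iff_int by blast
  have n0: "real n \<noteq> 0" using assms by (cases n) auto
  have "real_of_int (2*z) = real_of_int (i * int n)"
    using i(2) n0 by (simp add: field_simps)
  then have "2*z = i * int n" by linarith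
  then have "even (i * int n)" by (metis dvd_triv_left)
  then show False using i(1) assms by simp
qed

lemma det_scaled:
  fixes S :: "nat \<Rightarrow> nat \<Rightarrow> 'a::comm_ring_1"
  shows "det (mat m m (\<lambda>(j,k). u j * S j k * v k)) = prod u {0..<m} * det (mat m m (\<lambda>(j,k). S j k)) * prod v {0..<m}"
proof -
  have "mat m m (\<lambda>(j,k). u j * S j k * v k) = mat_diag m u * mat m m (\<lambda>(j,k). S j k) * mat_diag m v"
    by (simp add: mat_diag_mult_left[of _ m m] mat_diag_mult_right[of _ m m])
       (rule eq_matI, auto)
  moreover have "det (mat_diag m f) = prod f {0..<m}" for f :: "nat \<Rightarrow> 'a"
  proof -
    have "det (mat_diag m f) = prod_list (diag_mat (mat_diag m f))"
      by (rule det_lower_triangular[of m]) (auto simp: mat_diag_def)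
    also have "diag_mat (mat_diag m f) = map f [0..<m]"
      unfolding diag_mat_def by (rule nth_equalityI) (auto simp: mat_diag_def)
    finally show ?thesis by (simp add: prod.distinct_set_conv_list[symmetric])
  qed
  moreover have "det (mat_diag m u * mat m m (\<lambda>(j,k). S j k) * mat_diag m v)
     = det (mat_diag m u * mat m m (\<lambda>(j,k). S j k)) * det (mat_diag m v)"
    by (rule det_mult[of _ m]) (auto intro: mult_carrier_mat[of _ m m])
  moreover have "det (mat_diag m u * mat m m (\<lambda>(j,k). S j k)) = det (mat_diag m u) * det (mat m m (\<lambda>(j,k). S j k))"
    by (rule det_mult[of _ m]) auto
  ultimately show ?thesis by simp
qed

theorem lemma4p2:
  fixes m n :: nat and a b :: "nat \<Rightarrow> int" and x :: real
  assumes "m > 0" and "n > 0" and "odd n" and "a 0 + b 0 = 0"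
  shows "det (mat (m+1) (m+1) (\<lambda>(j,k). x + tan (pi * real_of_int (a j + b k) / real n)))
         - det (mat (m+1) (m+1) (\<lambda>(j,k). tan (pi * real_of_int (a j + b k) / real n)))
       = x * det (mat m m (\<lambda>(j,k). tan (pi * real_of_int (a (j+1) + b (k+1)) / real n)))
           * (\<Prod>k=1..m. tan (pi * real_of_int (a k + b 0) / real n)
                         * tan (pi * real_of_int (a 0 + b k) / real n))"
proof -
  define T where "T j k = tan (pi * real_of_int (a j + b k) / real n)" for j k
  have T00: "T 0 0 = 0" using assms(4) by (simp add: T_def)
  have D: "T (j+1) (k+1) - T (j+1) 0 - T 0 (k+1) = T (j+1) 0 * T (j+1) (k+1) * T 0 (k+1)" for j k
  proof -
    define p where "p = pi * real_of_int (a (j+1) + b 0) / real n"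
    define q where "q = pi * real_of_int (a 0 + b (k+1)) / real n"
    have pq: "p + q = pi * real_of_int (a (j+1) + b (k+1)) / real n"
    proof -
      have "a (j+1) + b (k+1) = (a (j+1) + b 0) + (a 0 + b (k+1))" using assms(4) by simp
      then have e: "real_of_int (a (j+1) + b (k+1)) = real_of_int (a (j+1) + b 0) + real_of_int (a 0 + b (k+1))"
        by (metis of_int_add)
      show ?thesis unfolding p_def q_def e by (simp only: distrib_left add_divide_distrib)
    qed
    have "tan (p+q) - tan p - tan q = tan p * tan (p+q) * tan q"
    proof (rule tan_id)
      show "cos p \<noteq> 0" unfolding p_def by (rule cos_nz[OF assms(3)])
      show "cos q \<noteq> 0" unfolding q_def by (rule cos_nz[OF assms(3)])
      show "cos (p+q) \<noteq> 0" unfolding pq by (rule cos_nz[OF assms(3)])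
    qed
    then show ?thesis unfolding T_def pq[symmetric] p_def[symmetric] q_def[symmetric] .
  qed
  have P: "prod (\<lambda>j. T (j+1) 0) {0..<m} * prod (\<lambda>k. T 0 (k+1)) {0..<m} = (\<Prod>k=1..m. T k 0 * T 0 k)"
  proof -
    have "(\<Prod>k=1..m. T k 0 * T 0 k) = (\<Prod>k\<in>{0..<m}. T (k+1) 0 * T 0 (k+1))"
      by (rule prod.reindex_bij_witness[of _ "\<lambda>k. k+1" "\<lambda>k. k-1"]) auto
    then show ?thesis by (simp only: prod.distrib)
  qed
  have "det (mat (Suc m) (Suc m) (\<lambda>(j,k). x + T j k)) - det (mat (Suc m) (Suc m) (\<lambda>(j,k). T j k))
    = x * det (mat m m (\<lambda>(j,k). T (j+1) (k+1) - T (j+1) 0 - T 0 (k+1)))"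
    by (rule key[where T=T, OF T00])
  also have "\<dots> = x * det (mat m m (\<lambda>(j,k). T (j+1) 0 * T (j+1) (k+1) * T 0 (k+1)))"
    unfolding D ..
  also have "\<dots> = x * (prod (\<lambda>j. T (j+1) 0) {0..<m} * det (mat m m (\<lambda>(j,k). T (j+1) (k+1))) * prod (\<lambda>k. T 0 (k+1)) {0..<m})"
    by (simp only: det_scaled)
  also have "\<dots> = x * det (mat m m (\<lambda>(j,k). T (j+1) (k+1))) * (prod (\<lambda>j. T (j+1) 0) {0..<m} * prod (\<lambda>k. T 0 (k+1)) {0..<m})"
    by (simp only: ac_simps)
  also have "\<dots> = x * det (mat m m (\<lambda>(j,k). T (j+1) (k+1))) * (\<Prod>k=1..m. T k 0 * T 0 k)"
    unfolding P ..
  finally show ?thesis unfolding T_def Suc_eq_plus1 .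
qed

end
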